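(* Fix an archive level $K\ge 0$ and consider the period equilibria of the two environments $e\in\{\mathrm{HO},\mathrm{AI}\}$ at $K$, with posted flows $q_L^e(K),q_H^e(K)$ satisfying $Q^e(K)=\pi q_L^e(K)+(1-\pi)q_H^e(K)>0$ and $q_L^e(K)>0$. Then the expected knowledge increment satisfies $$\bar\Delta^e(K)=\Delta\cdot\frac{(1-\pi)\,q_H^{e}(K)}{\pi\,q_L^{e}(K)+(1-\pi)\,q_H^{e}(K)},$$ which is increasing in the ratio $q_H^e(K)/q_L^e(K)$. Therefore $c^{*,\mathrm{AI}}(K)\ge c^{*,\mathrm{HO}}(K)$ if and only if $$\frac{q_H^{\mathrm{AI}}(K)}{q_L^{\mathrm{AI}}(K)}\ge \frac{q_H^{\mathrm{HO}}(K)}{q_L^{\mathrm{HO}}(K)}.$$ Moreover, holding escalation probabilities fixed across environments ($m_\theta^{\mathrm{AI}}(K)=m_\theta^{\mathrm{HO}}(K)$ for both $\theta\in\{L,H\}$), a sufficient condition for the posted pool to be more $H$-rich under AI (i.e. for the displayed ratio inequality to hold) is $$\frac{1-a_H^{\mathrm{AI}}(K)}{1-a_H^{\mathrm{HO}}(K)}>\frac{1-a_L^{\mathrm{AI}}(K)}{1-a_L^{\mathrm{HO}}(K)}.$$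
   Context: Model: routine-task share $\pi\in(0,1)$; query types $\theta\in\{L,H\}$ (routine and knowledge-enhancing); environments $e\in\{\mathrm{HO},\mathrm{AI}\}$ (human-only and AI). Parameters $\Delta>0$ (knowledge increment from a resolved type-$H$ query), $\beta\ge 0$, $u\ge 0$. For each $e$ and $K$: private-resolution probabilities $a_\theta^e(K)\in[0,1)$; a posting-cost CDF $\Gamma_\theta$ on $[0,\infty)$; private values $V_\theta>0$; an answering-cost CDF $F$ on $[0,\bar c]$; a cost shifter $C(K)$. In a period equilibrium at $(K,e)$ the following hold: match probability $\mu^e=\min\{1,\Psi(\alpha^{*,e})/Q^e\}$ where $\Psi(\alpha^{*,e})$ is the mass of participating contributors; expected increment $\bar\Delta^e=(1-\pi)q_H^e\Delta/Q^e$; answering cutoff $c^{*,e}(K)=\max\{0,\beta\bar\Delta^e(K)+u-C(K)\}$; resolution probability $\sigma^e=\mu^eF(c^{*,e})$; escalation probabilities $m_\theta^e=\Gamma_\theta(\sigma^eV_\theta)$; posted flows $q_\theta^e(K)=m_\theta^e(K)[1-a_\theta^e(K)]$ and total flow $Q^e=\pi q_L^e+(1-\pi)q_H^e$.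
   Formalization: The equivalence between $c^{*,\mathrm{AI}}(K)\ge c^{*,\mathrm{HO}}(K)$ and the ratio inequality holds only when $\beta>0$ and $c^{*,\mathrm{HO}}(K)>0$; without these, only the ratio inequality implies $c^{*,\mathrm{AI}}(K)\ge c^{*,\mathrm{HO}}(K)$. Apart from conventions, each condition added here is assumed in the paper as well or is needed for the statement above to hold. *)

theory Defs
  imports Complex_Main
begin

datatype env = HO | AI
datatype qtype = L | H

definition cdf_on :: "real \<Rightarrow> real \<Rightarrow> (real \<Rightarrow> real) \<Rightarrow> bool" where
  "cdf_on lo hi G \<longleftrightarrow> mono G \<and> (\<forall>x. 0 \<le> G x \<and> G x \<le> 1)
      \<and> (\<forall>x. x < lo \<longrightarrow> G x = 0) \<and> (\<forall>x. hi \<le> x \<longrightarrow> G x = 1)"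

definition cdf_nonneg :: "(real \<Rightarrow> real) \<Rightarrow> bool" where
  "cdf_nonneg G \<longleftrightarrow> mono G \<and> (\<forall>x. 0 \<le> G x \<and> G x \<le> 1) \<and> (\<forall>x. x < 0 \<longrightarrow> G x = 0)"

text \<open>Primitives: routine share rs, increment Delta,
  beta, u, private-resolution probabilities a e theta K, posting-cost CDFs Gam theta,
  private values V theta, answering-cost CDF F, cost shifter C, and the mass of
  participating contributors Psi (= Psi(alpha^{*,e}) at K).
  Equilibrium objects: match probability mu, expected increment Db, cutoff c,
  resolution probability sigma, escalation probabilities m, posted flows q, total flow Q.\<close>
definition period_eq ::
  "real \<Rightarrow> real \<Rightarrow> real \<Rightarrow> real \<Rightarrow> (env \<Rightarrow> qtype \<Rightarrow> real \<Rightarrow> real) \<Rightarrow>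
   (qtype \<Rightarrow> real \<Rightarrow> real) \<Rightarrow> (qtype \<Rightarrow> real) \<Rightarrow> (real \<Rightarrow> real) \<Rightarrow> (real \<Rightarrow> real) \<Rightarrow>
   real \<Rightarrow> real \<Rightarrow> env \<Rightarrow>
   real \<Rightarrow> real \<Rightarrow> real \<Rightarrow> real \<Rightarrow> (qtype \<Rightarrow> real) \<Rightarrow> (qtype \<Rightarrow> real) \<Rightarrow> real \<Rightarrow> bool" where
  "period_eq rs Delta beta u a Gam V F C Psi K e mu Db c sigma m q Q \<longleftrightarrow>
     Q = rs * q L + (1 - rs) * q H \<and>
     mu = min 1 (Psi / Q) \<and>
     Db = (1 - rs) * q H * Delta / Q \<and>
     c = max 0 (beta * Db + u - C K) \<and>
     sigma = mu * F c \<and>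
     (\<forall>\<theta>. m \<theta> = Gam \<theta> (sigma * V \<theta>)) \<and>
     (\<forall>\<theta>. q \<theta> = m \<theta> * (1 - a e \<theta> K))"

definition dbar_of_ratio :: "real \<Rightarrow> real \<Rightarrow> real \<Rightarrow> real" where
  "dbar_of_ratio rs Delta r = Delta * ((1 - rs) * r / (rs + (1 - rs) * r))"

end

theory Submission
  imports Defs
begin

lemma dbar_smono:
  assumes rs: "0 < rs" "rs < 1" and D: "Delta > 0"
  shows "strict_mono_on {0..} (dbar_of_ratio rs Delta)"
proof (rule strict_mono_onI)
  fix r s :: real assume "r \<in> {0..}" "s \<in> {0..}" "r < s"
  hence r: "r \<ge> 0" and s: "s \<ge> 0" and rs': "r < s" by auto
  have p1: "rs + (1 - rs) * r > 0" using rs r by (smt (verit) mult_nonneg_nonneg)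
  have p2: "rs + (1 - rs) * s > 0" using rs s by (smt (verit) mult_nonneg_nonneg)
  have "(1 - rs) * r * (rs + (1 - rs) * s) < (1 - rs) * s * (rs + (1 - rs) * r)"
  proof -
    have "(1 - rs) * r * (rs + (1 - rs) * s) - (1 - rs) * s * (rs + (1 - rs) * r)
          = (1 - rs) * rs * (r - s)" by (simp add: algebra_simps)
    also have "\<dots> < 0" using rs rs' by (simp add: mult_pos_neg)
    finally show ?thesis by simp
  qed
  hence "(1 - rs) * r / (rs + (1 - rs) * r) < (1 - rs) * s / (rs + (1 - rs) * s)"
    using p1 p2 by (simp add: divide_simps)
  hence "Delta * ((1 - rs) * r / (rs + (1 - rs) * r)) < Delta * ((1 - rs) * s / (rs + (1 - rs) * s))"
    using D by (rule mult_strict_left_mono)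
  thus "dbar_of_ratio rs Delta r < dbar_of_ratio rs Delta s"
    unfolding dbar_of_ratio_def .
qed

lemma smono_le_iff:
  assumes "strict_mono_on S f" "x \<in> S" "y \<in> S"
  shows "(f x \<le> (f y::real)) \<longleftrightarrow> x \<le> (y::real)"
proof
  assume h: "f x \<le> f y"
  show "x \<le> y"
  proof (rule ccontr)
    assume "\<not> x \<le> y"
    hence "y < x" by simp
    hence "f y < f x" using assms unfolding strict_mono_on_def by blast
    thus False using h by simp
  qed
next
  assume h: "x \<le> y"
  show "f x \<le> f y"
  proof (cases "x = y")
    case True thus ?thesis by simp
  next
    case False
    hence "x < y" using h by simp
    thus ?thesis using assms unfolding strict_mono_on_def by fastforce
  qed
qed

theorem lemma1:
  fixes rs Delta beta u cbar K :: real
    and a :: "env \<Rightarrow> qtype \<Rightarrow> real \<Rightarrow> real"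
    and Gam :: "qtype \<Rightarrow> real \<Rightarrow> real" and V :: "qtype \<Rightarrow> real"
    and F C :: "real \<Rightarrow> real" and Psi :: "env \<Rightarrow> real"
    and mu Db c sigma Q :: "env \<Rightarrow> real" and m q :: "env \<Rightarrow> qtype \<Rightarrow> real"
  assumes rs: "0 < rs" "rs < 1"
    and Delta: "Delta > 0" and beta: "beta \<ge> 0" and u: "u \<ge> 0"
    and a_rng: "\<And>e \<theta> k. 0 \<le> a e \<theta> k \<and> a e \<theta> k < 1"
    and Gam: "\<And>\<theta>. cdf_nonneg (Gam \<theta>)"
    and V: "\<And>\<theta>. V \<theta> > 0"
    and cbar: "cbar \<ge> 0" and F: "cdf_on 0 cbar F"
    and Psi: "\<And>e. Psi e \<ge> 0"
    and K: "K \<ge> 0"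
    and eq: "\<And>e. period_eq rs Delta beta u a Gam V F C (Psi e) K e
                    (mu e) (Db e) (c e) (sigma e) (m e) (q e) (Q e)"
    and Qpos: "\<And>e. Q e > 0"
    and qLpos: "\<And>e. q e L > 0"
  shows "(\<forall>e. Db e = Delta * ((1 - rs) * q e H / (rs * q e L + (1 - rs) * q e H)))
       \<and> (\<forall>e. Db e = dbar_of_ratio rs Delta (q e H / q e L))
       \<and> strict_mono_on {0..} (dbar_of_ratio rs Delta)
       \<and> (q AI H / q AI L \<ge> q HO H / q HO L \<longrightarrow> c AI \<ge> c HO)
       \<and> (beta > 0 \<and> c HO > 0 \<longrightarrow>
             (c AI \<ge> c HO \<longleftrightarrow> q AI H / q AI L \<ge> q HO H / q HO L))
       \<and> ((\<forall>\<theta>. m AI \<theta> = m HO \<theta>) \<and>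
           (1 - a AI H K) / (1 - a HO H K) > (1 - a AI L K) / (1 - a HO L K)
           \<longrightarrow> q AI H / q AI L \<ge> q HO H / q HO L)"
proof -
  have Qd: "Q e = rs * q e L + (1 - rs) * q e H" for e using eq[of e] unfolding period_eq_def by blast
  have Dbd: "Db e = (1 - rs) * q e H * Delta / Q e" for e using eq[of e] unfolding period_eq_def by blast
  have cd: "c e = max 0 (beta * Db e + u - C K)" for e using eq[of e] unfolding period_eq_def by blast
  have qd: "q e t = m e t * (1 - a e t K)" for e t using eq[of e] unfolding period_eq_def by blast
  have md: "m e t = Gam t (sigma e * V t)" for e t using eq[of e] unfolding period_eq_def by blast
  have m0: "m e t \<ge> 0" for e t using Gam[of t] md[of e t] unfolding cdf_nonneg_def by simp
  have q0: "q e t \<ge> 0" for e t using qd[of e t] m0[of e t] a_rng[of e t K] by simp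
  have r0: "q e H / q e L \<ge> 0" for e using q0[of e H] qLpos[of e] by simp
  have P1: "Db e = Delta * ((1 - rs) * q e H / (rs * q e L + (1 - rs) * q e H))" for e
    using Dbd[of e] Qd[of e] by simp
  have P2: "Db e = dbar_of_ratio rs Delta (q e H / q e L)" for e
  proof -
    have qL: "q e L > 0" using qLpos by simp
    have "rs + (1 - rs) * (q e H / q e L) = (rs * q e L + (1 - rs) * q e H) / q e L"
      using qL by (simp add: field_simps)
    moreover have "(1 - rs) * (q e H / q e L) = ((1 - rs) * q e H) / q e L" by simp
    ultimately have E: "(1 - rs) * (q e H / q e L) / (rs + (1 - rs) * (q e H / q e L))
        = (1 - rs) * q e H / (rs * q e L + (1 - rs) * q e H)"
      using qL by simp
    show ?thesis unfolding dbar_of_ratio_def E by (rule P1)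
  qed
  have SM: "strict_mono_on {0..} (dbar_of_ratio rs Delta)" using dbar_smono rs Delta by blast
  have DbIff: "Db HO \<le> Db AI \<longleftrightarrow> q HO H / q HO L \<le> q AI H / q AI L"
    using smono_le_iff[OF SM, of "q HO H / q HO L" "q AI H / q AI L"] P2 r0 by simp
  have P4: "q AI H / q AI L \<ge> q HO H / q HO L \<longrightarrow> c AI \<ge> c HO"
  proof
    assume "q AI H / q AI L \<ge> q HO H / q HO L"
    hence "Db HO \<le> Db AI" using DbIff by simp
    hence "beta * Db HO \<le> beta * Db AI" using beta by (simp add: mult_left_mono)
    thus "c AI \<ge> c HO" using cd[of AI] cd[of HO] by simp
  qed
  have P5: "beta > 0 \<and> c HO > 0 \<longrightarrow>
             (c AI \<ge> c HO \<longleftrightarrow> q AI H / q AI L \<ge> q HO H / q HO L)"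
  proof (intro impI iffI)
    assume h: "beta > 0 \<and> c HO > 0" "c AI \<ge> c HO"
    hence "c HO = beta * Db HO + u - C K" "c AI = beta * Db AI + u - C K"
      using cd[of AI] cd[of HO] by auto
    hence "beta * Db HO \<le> beta * Db AI" using h by simp
    hence "Db HO \<le> Db AI" using h by simp
    thus "q AI H / q AI L \<ge> q HO H / q HO L" using DbIff by simp
  next
    assume "q AI H / q AI L \<ge> q HO H / q HO L"
    thus "c AI \<ge> c HO" using P4 by simp
  qed
  have P6: "(\<forall>\<theta>. m AI \<theta> = m HO \<theta>) \<and>
           (1 - a AI H K) / (1 - a HO H K) > (1 - a AI L K) / (1 - a HO L K)
           \<longrightarrow> q AI H / q AI L \<ge> q HO H / q HO L"
  proof
    assume h: "(\<forall>\<theta>. m AI \<theta> = m HO \<theta>) \<and>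
           (1 - a AI H K) / (1 - a HO H K) > (1 - a AI L K) / (1 - a HO L K)"
    define xH where "xH = 1 - a AI H K"
    define yH where "yH = 1 - a HO H K"
    define xL where "xL = 1 - a AI L K"
    define yL where "yL = 1 - a HO L K"
    have pos: "xH > 0" "yH > 0" "xL > 0" "yL > 0"
      using a_rng unfolding xH_def yH_def xL_def yL_def by (smt (verit))+
    have mL: "m HO L > 0" using qLpos[of HO] qd[of HO L] m0[of HO L] pos(4) yL_def
      by (metis mult_eq_0_iff order_less_le zero_less_mult_pos2)
    have mH: "m HO H \<ge> 0" using m0 by simp
    have ineq: "xH / yH > xL / yL" using h xH_def yH_def xL_def yL_def by simp
    hence "xH * yL > xL * yH" using pos by (simp add: divide_simps)
    hence key: "m HO H * xH * yL \<ge> m HO H * xL * yH" using mH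
      by (metis mult.assoc mult_left_mono order_less_imp_le)
    have qa: "q AI H / q AI L = (m HO H / m HO L) * (xH / xL)"
      using qd h xH_def xL_def by simp
    have qh: "q HO H / q HO L = (m HO H / m HO L) * (yH / yL)"
      using qd yH_def yL_def by simp
    have "xH * yL \<ge> xL * yH" using \<open>xH * yL > xL * yH\<close> by simp
    hence "yH / yL \<le> xH / xL" using pos by (simp add: divide_simps mult.commute)
    moreover have "m HO H / m HO L \<ge> 0" using mH mL by simp
    ultimately show "q AI H / q AI L \<ge> q HO H / q HO L"
      unfolding qa qh by (rule mult_left_mono)
  qed
  show ?thesis using P1 P2 SM P4 P5 P6 by blast
qed

end
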